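(* (Flow extension lemma.) Let $\Sigma=(V,E)$ be a finite directed network in which every edge has capacity $1$, which is inner-superbalanced, and whose boundary is partitioned as $\partial\Sigma=B_1\sqcup B_2\sqcup B_3$ with $S(B_1)=0$. Let $v$ be a $\{0,1\}$-valued flow that is reachable from $B_1$. Then there exists a $\{0,1\}$-valued flow $\tilde v$ extending $v$ (i.e. $\tilde v^e\ge v^e$ for every edge $e$) such that $\tilde v-v$ is a max flow on $B_2$. Furthermore, $\tilde v$ can be chosen so that $\tilde v-v$ is a collection of $S(B_2)$ edge-disjoint directed paths from $B_2$ to $B_2^c=\partial\Sigma\setminus B_2$, and in particular $\tilde v$ is reachable from $B_1\sqcup B_2$.
   Context: For a directed edge $e$, $s(e)$ and $t(e)$ denote its source and target. A flow on a directed network with capacities $c$ is a function $v:E\to\mathbb R_{\ge0}$ with $v^e\le c^e$ and, at every non-boundary vertex $x$, $\sum_{e:t(e)=x}v^e=\sum_{e:s(e)=x}v^e$. The flux of $v$ out of $A\subset\partial\Sigma$ is $S(A;v)=\sum_{e:s(e)\in A}v^e-\sum_{e:t(e)\in A}v^e$, and $S(A)$ is the maximum flux out of $A$ over all flows; a max flow on $A$ is a flow attaining it. A network is inner-superbalanced if at each non-boundary vertex the total capacity of incoming edges is at most that of outgoing edges. A $\{0,1\}$-valued flow $v$ is reachable from a boundary set $A$ if for every edge $e$ with $v^e\neq0$ there is a directed path, all of whose edges have $v$-value $1$, from a vertex of $A$ to $s(e)$. *)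

theory Defs
  imports Complex_Main
begin

text \<open>A finite directed network: vertex set V, edge set E (multi-edges and loops allowed,
edges are abstract), source map s, target map t, boundary Bd \<subseteq> V.
All capacities equal 1.\<close>

definition network :: "'v set \<Rightarrow> 'e set \<Rightarrow> ('e \<Rightarrow> 'v) \<Rightarrow> ('e \<Rightarrow> 'v) \<Rightarrow> 'v set \<Rightarrow> bool" where
  "network V E s t Bd \<longleftrightarrow> finite V \<and> finite E \<and> Bd \<subseteq> V \<and> (\<forall>e\<in>E. s e \<in> V \<and> t e \<in> V)"

definition is_flow :: "'v set \<Rightarrow> 'e set \<Rightarrow> ('e \<Rightarrow> 'v) \<Rightarrow> ('e \<Rightarrow> 'v) \<Rightarrow> 'v set \<Rightarrow> ('e \<Rightarrow> real) \<Rightarrow> bool" where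
  "is_flow V E s t Bd f \<longleftrightarrow>
     (\<forall>e\<in>E. 0 \<le> f e \<and> f e \<le> 1) \<and>
     (\<forall>x\<in>V - Bd. (\<Sum>e\<in>{e\<in>E. t e = x}. f e) = (\<Sum>e\<in>{e\<in>E. s e = x}. f e))"

definition inner_superbalanced :: "'v set \<Rightarrow> 'e set \<Rightarrow> ('e \<Rightarrow> 'v) \<Rightarrow> ('e \<Rightarrow> 'v) \<Rightarrow> 'v set \<Rightarrow> bool" where
  "inner_superbalanced V E s t Bd \<longleftrightarrow>
     (\<forall>x\<in>V - Bd. (\<Sum>e\<in>{e\<in>E. t e = x}. (1::real)) \<le> (\<Sum>e\<in>{e\<in>E. s e = x}. (1::real)))"

definition flux :: "'e set \<Rightarrow> ('e \<Rightarrow> 'v) \<Rightarrow> ('e \<Rightarrow> 'v) \<Rightarrow> 'v set \<Rightarrow> ('e \<Rightarrow> real) \<Rightarrow> real" where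
  "flux E s t A f = (\<Sum>e\<in>{e\<in>E. s e \<in> A}. f e) - (\<Sum>e\<in>{e\<in>E. t e \<in> A}. f e)"

definition maxflux :: "'v set \<Rightarrow> 'e set \<Rightarrow> ('e \<Rightarrow> 'v) \<Rightarrow> ('e \<Rightarrow> 'v) \<Rightarrow> 'v set \<Rightarrow> 'v set \<Rightarrow> real" where
  "maxflux V E s t Bd A = Sup {flux E s t A f | f. is_flow V E s t Bd f}"

definition is_max_flow :: "'v set \<Rightarrow> 'e set \<Rightarrow> ('e \<Rightarrow> 'v) \<Rightarrow> ('e \<Rightarrow> 'v) \<Rightarrow> 'v set \<Rightarrow> 'v set \<Rightarrow> ('e \<Rightarrow> real) \<Rightarrow> bool" where
  "is_max_flow V E s t Bd A f \<longleftrightarrow> is_flow V E s t Bd f \<and> flux E s t A f = maxflux V E s t Bd A"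

definition zero_one :: "'e set \<Rightarrow> ('e \<Rightarrow> real) \<Rightarrow> bool" where
  "zero_one E f \<longleftrightarrow> (\<forall>e\<in>E. f e = 0 \<or> f e = 1)"

fun walk :: "'e set \<Rightarrow> ('e \<Rightarrow> 'v) \<Rightarrow> ('e \<Rightarrow> 'v) \<Rightarrow> 'v \<Rightarrow> 'e list \<Rightarrow> 'v \<Rightarrow> bool" where
  "walk E s t a [] b \<longleftrightarrow> a = b"
| "walk E s t a (e # es) b \<longleftrightarrow> e \<in> E \<and> s e = a \<and> walk E s t (t e) es b"

definition dpath :: "'e set \<Rightarrow> ('e \<Rightarrow> 'v) \<Rightarrow> ('e \<Rightarrow> 'v) \<Rightarrow> 'v \<Rightarrow> 'e list \<Rightarrow> 'v \<Rightarrow> bool" where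
  "dpath E s t a es b \<longleftrightarrow> walk E s t a es b \<and> distinct (a # map t es)"

definition reachable_from :: "'v set \<Rightarrow> 'e set \<Rightarrow> ('e \<Rightarrow> 'v) \<Rightarrow> ('e \<Rightarrow> 'v) \<Rightarrow> 'v set \<Rightarrow> 'v set \<Rightarrow> ('e \<Rightarrow> real) \<Rightarrow> bool" where
  "reachable_from V E s t Bd A f \<longleftrightarrow> is_flow V E s t Bd f \<and> zero_one E f \<and>
     (\<forall>e\<in>E. f e \<noteq> 0 \<longrightarrow>
        (\<exists>a\<in>A. \<exists>es. dpath E s t a es (s e) \<and> (\<forall>d\<in>set es. f d = 1)))"

end

theory Submission imports Defs begin

definition ind :: "'a set \<Rightarrow> 'a \<Rightarrow> real" where "ind A x = (if x \<in> A then 1 else 0)"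

definition Dsum :: "'e set \<Rightarrow> ('e \<Rightarrow> 'v) \<Rightarrow> ('e \<Rightarrow> 'v) \<Rightarrow> ('e \<Rightarrow> real) \<Rightarrow> ('v \<Rightarrow> real) \<Rightarrow> real" where
  "Dsum E s t h \<phi> = (\<Sum>e\<in>E. h e * (\<phi> (s e) - \<phi> (t e)))"

lemma sum_ind_filter: "finite E \<Longrightarrow> (\<Sum>e\<in>E. h e * ind A (f e)) = (\<Sum>e\<in>{e\<in>E. f e \<in> A}. h e)"
  by (simp add: sum.inter_filter ind_def if_distrib cong: if_cong)

lemma flux_Dsum: "finite E \<Longrightarrow> flux E s t A h = Dsum E s t h (ind A)"
  unfolding flux_def Dsum_def
  by (simp add: right_diff_distrib sum_subtractf sum_ind_filter)

lemma cons_Dsum: "finite E \<Longrightarrow> ((\<Sum>e\<in>{e\<in>E. t e = x}. h e) = (\<Sum>e\<in>{e\<in>E. s e = x}. h e)) \<longleftrightarrow> Dsum E s t h (ind {x}) = 0"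
proof -
  assume "finite E"
  then have "Dsum E s t h (ind {x}) = (\<Sum>e\<in>{e\<in>E. s e \<in> {x}}. h e) - (\<Sum>e\<in>{e\<in>E. t e \<in> {x}}. h e)"
    using flux_Dsum[of E s t "{x}" h] by (simp add: flux_def)
  then show ?thesis by auto
qed

lemma Dsum_add: "Dsum E s t (\<lambda>e. h1 e + h2 e) \<phi> = Dsum E s t h1 \<phi> + Dsum E s t h2 \<phi>"
  unfolding Dsum_def by (simp add: sum.distrib[symmetric] algebra_simps)

lemma Dsum_diff: "Dsum E s t (\<lambda>e. h1 e - h2 e) \<phi> = Dsum E s t h1 \<phi> - Dsum E s t h2 \<phi>"
  unfolding Dsum_def by (simp add: sum_subtractf[symmetric] algebra_simps)

lemma Dsum_phi_add: "Dsum E s t h (\<lambda>y. \<phi>1 y + \<phi>2 y) = Dsum E s t h \<phi>1 + Dsum E s t h \<phi>2"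
  unfolding Dsum_def by (simp add: sum.distrib[symmetric] algebra_simps)

lemma Dsum_sum_vertices:
  assumes "finite Z"
  shows "Dsum E s t h (ind Z) = (\<Sum>z\<in>Z. Dsum E s t h (ind {z}))"
  using assms
proof (induction Z rule: finite_induct)
  case empty
  then show ?case by (simp add: Dsum_def ind_def)
next
  case (insert z Z)
  have "ind (insert z Z) = (\<lambda>y. ind {z} y + ind Z y)"
    using insert.hyps by (auto simp: ind_def)
  then show ?case using insert by (simp add: Dsum_phi_add)
qed

lemma Dsum_delta:
  assumes "e0 \<in> E" "finite E"
  shows "Dsum E s t (\<lambda>e. if e = e0 then c else 0) \<phi> = c * (\<phi> (s e0) - \<phi> (t e0))"
proof -
  have "(\<Sum>e\<in>E. (if e = e0 then c else 0) * (\<phi> (s e) - \<phi> (t e))) = (\<Sum>e\<in>E. if e = e0 then c * (\<phi> (s e) - \<phi> (t e)) else 0)"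
    by (rule sum.cong) auto
  then show ?thesis using assms unfolding Dsum_def by simp
qed

lemma Dsum_cong: "(\<And>e. e \<in> E \<Longrightarrow> h1 e = h2 e) \<Longrightarrow> Dsum E s t h1 \<phi> = Dsum E s t h2 \<phi>"
  unfolding Dsum_def by simp

lemma walk_mono: "walk F s t a p b \<Longrightarrow> F \<subseteq> E \<Longrightarrow> walk E s t a p b"
  by (induction p arbitrary: a) auto

lemma walk_append: "walk E s t a (p @ q) c \<longleftrightarrow> (\<exists>b. walk E s t a p b \<and> walk E s t b q c)"
  by (induction p arbitrary: a) auto

lemma walk_set: "walk E s t a p b \<Longrightarrow> set p \<subseteq> E"
  by (induction p arbitrary: a) auto

lemma dpath_drop:
  "dpath E s t u q b \<Longrightarrow> k \<le> length q \<Longrightarrow> dpath E s t ((u # map t q) ! k) (drop k q) b"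
proof (induction q arbitrary: u k)
  case Nil
  then show ?case by simp
next
  case (Cons e q)
  show ?case
  proof (cases k)
    case 0
    then show ?thesis using Cons.prems by simp
  next
    case (Suc k')
    have "dpath E s t (t e) q b" using Cons.prems by (auto simp: dpath_def)
    then have "dpath E s t ((t e # map t q) ! k') (drop k' q) b"
      using Cons.IH Cons.prems Suc by simp
    then show ?thesis using Suc by simp
  qed
qed

lemma shortcut: "walk E s t a p b \<Longrightarrow> \<exists>q. dpath E s t a q b \<and> set q \<subseteq> set p"
proof (induction p arbitrary: a)
  case Nil
  then show ?case by (auto simp: dpath_def)
next
  case (Cons e p)
  then have e: "e \<in> E" "s e = a" and w: "walk E s t (t e) p b" by auto
  from Cons.IH[OF w] obtain q where q: "dpath E s t (t e) q b" "set q \<subseteq> set p" by blast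
  show ?case
  proof (cases "a \<in> set (t e # map t q)")
    case False
    then have "dpath E s t a (e # q) b" using q e by (auto simp: dpath_def)
    moreover have "set (e # q) \<subseteq> set (e # p)" using q by auto
    ultimately show ?thesis by blast
  next
    case True
    then obtain k where k: "k < length (t e # map t q)" "(t e # map t q) ! k = a"
      by (metis in_set_conv_nth)
    then have "dpath E s t a (drop k q) b" using dpath_drop[OF q(1), of k] by simp
    moreover have "set (drop k q) \<subseteq> set (e # p)" using q(2) set_drop_subset by fastforce
    ultimately show ?thesis by blast
  qed
qed

lemma dpath_distinct: "dpath E s t a p b \<Longrightarrow> distinct p"
  unfolding dpath_def by (auto dest: distinct_map[THEN iffD1])

lemma Dsum_path:
  assumes "walk E s t a p b" "distinct p" "finite E"
  shows "Dsum E s t (ind (set p)) \<phi> = \<phi> a - \<phi> b"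
  using assms
proof (induction p arbitrary: a)
  case Nil
  then show ?case by (simp add: Dsum_def ind_def)
next
  case (Cons e p)
  have "ind (set (e # p)) = (\<lambda>x. ind (set p) x + (if x = e then 1 else 0))"
    using Cons.prems by (auto simp: ind_def)
  moreover have "Dsum E s t (ind (set p)) \<phi> = \<phi> (t e) - \<phi> b" using Cons by auto
  ultimately show ?case using Cons.prems by (simp add: Dsum_add Dsum_delta)
qed


definition rs :: "('e \<Rightarrow> 'v) \<Rightarrow> ('e \<Rightarrow> 'v) \<Rightarrow> 'e \<times> bool \<Rightarrow> 'v" where
  "rs s t x = (if snd x then s (fst x) else t (fst x))"
definition rt :: "('e \<Rightarrow> 'v) \<Rightarrow> ('e \<Rightarrow> 'v) \<Rightarrow> 'e \<times> bool \<Rightarrow> 'v" where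
  "rt s t x = (if snd x then t (fst x) else s (fst x))"
definition hq :: "('e \<times> bool) list \<Rightarrow> 'e \<Rightarrow> real" where
  "hq q e = (if (e, True) \<in> set q then 1 else 0) - (if (e, False) \<in> set q then 1 else 0)"

lemma Dsum_res:
  assumes "walk Ar (rs s t) (rt s t) a q b" "distinct q" "fst ` set q \<subseteq> E" "finite E"
  shows "Dsum E s t (hq q) \<phi> = \<phi> a - \<phi> b"
  using assms
proof (induction q arbitrary: a)
  case Nil
  then show ?case by (simp add: Dsum_def hq_def)
next
  case (Cons x q)
  obtain e bo where x: "x = (e, bo)" by (cases x)
  have e: "e \<in> E" using Cons.prems x by auto
  have nx: "x \<notin> set q" using Cons.prems by auto
  have h: "hq (x # q) = (\<lambda>y. hq q y + (if y = e then (if bo then 1 else -1) else 0))"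
    using nx x by (auto simp: hq_def fun_eq_iff)
  have IH: "Dsum E s t (hq q) \<phi> = \<phi> (rt s t x) - \<phi> b" using Cons by auto
  have a: "rs s t x = a" using Cons.prems by auto
  show ?case
    using IH a e Cons.prems(4) unfolding h Dsum_add
    by (cases bo) (simp_all add: Dsum_delta x rs_def rt_def)
qed

definition reach :: "'a set \<Rightarrow> ('a \<Rightarrow> 'v) \<Rightarrow> ('a \<Rightarrow> 'v) \<Rightarrow> 'v set \<Rightarrow> 'v set" where
  "reach Ar sr tr A = {y. \<exists>a\<in>A. \<exists>p. walk Ar sr tr a p y}"

lemma reach_step: "y \<in> reach Ar sr tr A \<Longrightarrow> x \<in> Ar \<Longrightarrow> sr x = y \<Longrightarrow> tr x \<in> reach Ar sr tr A"
  unfolding reach_def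
proof clarify
  fix a p assume "a \<in> A" "walk Ar (sr) tr a p (sr x)" "x \<in> Ar" "y = sr x"
  then have "walk Ar sr tr a (p @ [x]) (tr x)" by (auto simp: walk_append)
  then show "\<exists>a\<in>A. \<exists>p. walk Ar sr tr a p (tr x)" using \<open>a \<in> A\<close> by blast
qed

lemma reach_base: "A \<subseteq> reach Ar sr tr A"
  unfolding reach_def
proof
  fix x assume "x \<in> A"
  then show "x \<in> {y. \<exists>a\<in>A. \<exists>p. walk Ar sr tr a p y}" using walk.simps(1)[of Ar sr tr x x] by blast
qed

lemma reach_sub: "A \<subseteq> V \<Longrightarrow> (\<forall>x\<in>Ar. tr x \<in> V) \<Longrightarrow> reach Ar sr tr A \<subseteq> V"
proof -
  assume A: "A \<subseteq> V" and T: "\<forall>x\<in>Ar. tr x \<in> V"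
  have "walk Ar sr tr a p y \<Longrightarrow> a \<in> V \<Longrightarrow> y \<in> V" for a p y
    using T by (induction p arbitrary: a) auto
  then show ?thesis using A unfolding reach_def by blast
qed

lemma Dsum_bound:
  assumes "\<forall>e\<in>E. 0 \<le> h e \<and> h e \<le> 1"
  shows "Dsum E s t h (ind A) \<le> real (card E)"
proof -
  have "Dsum E s t h (ind A) \<le> (\<Sum>e\<in>E. 1)"
    unfolding Dsum_def
  proof (rule sum_mono)
    fix e assume "e \<in> E"
    then show "h e * (ind A (s e) - ind A (t e)) \<le> 1"
      using assms by (auto simp: ind_def)
  qed
  then show ?thesis by simp
qed

lemma flux_le_maxflux:
  assumes "finite E" "is_flow V E s t Bd f"
  shows "flux E s t A f \<le> maxflux V E s t Bd A"
  unfolding maxflux_def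
proof (rule cSup_upper)
  show "flux E s t A f \<in> {flux E s t A f |f. is_flow V E s t Bd f}" using assms by blast
  show "bdd_above {flux E s t A f |f. is_flow V E s t Bd f}"
    unfolding bdd_above_def
    using assms(1) by (auto simp: flux_Dsum is_flow_def intro!: exI[of _ "real (card E)"] Dsum_bound)
qed

lemma maxflux_le:
  assumes "\<And>f. is_flow V E s t Bd f \<Longrightarrow> flux E s t A f \<le> c"
  shows "maxflux V E s t Bd A \<le> c"
  unfolding maxflux_def
proof (rule cSup_least)
  have "is_flow V E s t Bd (\<lambda>_. 0)" by (simp add: is_flow_def)
  then show "{flux E s t A f |f. is_flow V E s t Bd f} \<noteq> {}" by blast
  show "\<And>x. x \<in> {flux E s t A f |f. is_flow V E s t Bd f} \<Longrightarrow> x \<le> c" using assms by blast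
qed

lemma inner_zero:
  assumes "finite Z" "\<forall>z\<in>Z. Dsum E s t h (ind {z}) = 0"
  shows "Dsum E s t h (ind Z) = 0"
  by (simp add: Dsum_sum_vertices[OF assms(1)] assms(2))

lemma ind_split: "A \<subseteq> Q \<Longrightarrow> ind Q = (\<lambda>y. ind A y + ind (Q - A) y)"
  by (auto simp: ind_def fun_eq_iff)

lemma find_path:
  assumes fE: "finite E" and fV: "finite V" and FE: "F \<subseteq> E" and ABd: "A \<subseteq> Bd" and BdV: "Bd \<subseteq> V"
    and eV: "\<forall>e\<in>E. s e \<in> V \<and> t e \<in> V"
    and cons: "\<forall>x\<in>V-Bd. Dsum E s t (ind F) (ind {x}) = 0"
    and pos: "Dsum E s t (ind F) (ind A) > 0"
  shows "\<exists>a\<in>A. \<exists>b\<in>Bd-A. \<exists>p. dpath E s t a p b \<and> set p \<subseteq> F"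
proof (rule ccontr)
  assume nex: "\<not> ?thesis"
  define Q where "Q = reach F s t A"
  have QV: "Q \<subseteq> V" unfolding Q_def
    by (rule reach_sub) (use ABd BdV eV FE in blast)+
  have AQ: "A \<subseteq> Q" unfolding Q_def by (rule reach_base)
  have QB: "Q \<inter> (Bd - A) = {}"
  proof (rule ccontr)
    assume "Q \<inter> (Bd - A) \<noteq> {}"
    then obtain b a p where b: "b \<in> Bd - A" "a \<in> A" "walk F s t a p b" unfolding Q_def reach_def by blast
    from shortcut[OF b(3)] obtain q where q: "dpath F s t a q b" "set q \<subseteq> set p" by blast
    have wq: "walk F s t a q b" using q(1) by (simp add: dpath_def)
    have "set q \<subseteq> F" using wq by (rule walk_set)
    moreover have "dpath E s t a q b" using q(1) walk_mono[OF wq FE] by (simp add: dpath_def)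
    ultimately have "\<exists>a\<in>A. \<exists>b\<in>Bd-A. \<exists>p. dpath E s t a p b \<and> set p \<subseteq> F" using b by blast
    then show False using nex by simp
  qed
  have "Dsum E s t (ind F) (ind (Q - A)) = 0"
  proof (rule inner_zero)
    show "finite (Q - A)" using QV fV by (meson finite_Diff finite_subset)
    show "\<forall>z\<in>Q - A. Dsum E s t (ind F) (ind {z}) = 0"
      using QV QB cons by blast
  qed
  then have "Dsum E s t (ind F) (ind Q) = Dsum E s t (ind F) (ind A)"
    using ind_split[OF AQ] by (simp add: Dsum_phi_add)
  moreover have "Dsum E s t (ind F) (ind Q) \<le> 0"
    unfolding Dsum_def
  proof (rule sum_nonpos)
    fix e assume "e \<in> E"
    show "ind F e * (ind Q (s e) - ind Q (t e)) \<le> 0"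
    proof (cases "e \<in> F \<and> s e \<in> Q")
      case True
      then have "t e \<in> Q" unfolding Q_def using reach_step[of "s e" F s t A e] by blast
      then show ?thesis using True by (simp add: ind_def)
    next
      case False
      then show ?thesis by (cases "e \<in> F") (simp_all add: ind_def)
    qed
  qed
  ultimately show False using pos by simp
qed


lemma card_cons_idx:
  "real (card {i. i < length (p # ps) \<and> e \<in> set ((p # ps) ! i)}) =
   ind (set p) e + real (card {i. i < length ps \<and> e \<in> set (ps ! i)})"
proof -
  have eq: "{i. i < length (p # ps) \<and> e \<in> set ((p # ps) ! i)} =
        (if e \<in> set p then {0} else {}) \<union> Suc ` {i. i < length ps \<and> e \<in> set (ps ! i)}"
    by (auto simp: image_iff less_Suc_eq_0_disj)
  have fin: "finite {i. i < length ps \<and> e \<in> set (ps ! i)}" by simp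
  have "card ((if e \<in> set p then {0} else {}) \<union> Suc ` {i. i < length ps \<and> e \<in> set (ps ! i)})
      = card (if e \<in> set p then {0::nat} else {}) + card (Suc ` {i. i < length ps \<and> e \<in> set (ps ! i)})"
    by (rule card_Un_disjoint) auto
  also have "card (Suc ` {i. i < length ps \<and> e \<in> set (ps ! i)}) = card {i. i < length ps \<and> e \<in> set (ps ! i)}"
    by (rule card_image) simp
  also have "card (if e \<in> set p then {0::nat} else {}) = (if e \<in> set p then 1 else 0)" by auto
  finally show ?thesis unfolding eq by (simp add: ind_def)
qed

definition decomp_ok where
  "decomp_ok V E s t Bd B2 F ps \<longleftrightarrow>
     (\<forall>p\<in>set ps. \<exists>a\<in>B2. \<exists>b\<in>Bd - B2. dpath E s t a p b) \<and>
     (\<forall>i<length ps. \<forall>j<length ps. i \<noteq> j \<longrightarrow> set (ps ! i) \<inter> set (ps ! j) = {}) \<and>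
     (\<forall>e. real (card {i. i < length ps \<and> e \<in> set (ps ! i)}) = ind (\<Union>p\<in>set ps. set p) e) \<and>
     (\<Union>p\<in>set ps. set p) \<subseteq> F \<and>
     (\<forall>x\<in>V-Bd. Dsum E s t (ind (\<Union>p\<in>set ps. set p)) (ind {x}) = 0) \<and>
     Dsum E s t (ind (\<Union>p\<in>set ps. set p)) (ind B2) = real (length ps) \<and>
     Dsum E s t (ind F) (ind B2) \<le> real (length ps)"

lemma decomp:
  assumes fE: "finite E" and fV: "finite V" and B2: "B2 \<subseteq> Bd" and BdV: "Bd \<subseteq> V"
    and eV: "\<forall>e\<in>E. s e \<in> V \<and> t e \<in> V"
  shows "finite F \<Longrightarrow> F \<subseteq> E \<Longrightarrow> (\<forall>x\<in>V-Bd. Dsum E s t (ind F) (ind {x}) = 0) \<Longrightarrow>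
     \<exists>ps. decomp_ok V E s t Bd B2 F ps"
proof (induction F rule: finite_psubset_induct)
  case (psubset F)
  show ?case
  proof (cases "Dsum E s t (ind F) (ind B2) > 0")
    case False
    have "decomp_ok V E s t Bd B2 F []"
      using False unfolding decomp_ok_def by (simp add: Dsum_def ind_def)
    then show ?thesis by blast
  next
    case True
    obtain a b p where ab: "a \<in> B2" "b \<in> Bd - B2" and p: "dpath E s t a p b" "set p \<subseteq> F"
      using find_path[OF fE fV psubset.prems(1) B2 BdV eV psubset.prems(2) True] by blast
    have wp: "walk E s t a p b" using p(1) by (simp add: dpath_def)
    have dp: "distinct p" using p(1) by (rule dpath_distinct)
    have "p \<noteq> []" using wp ab by auto
    then have sub: "F - set p \<subset> F" using p(2) by (cases p) auto
    have aBd: "a \<in> Bd" using ab B2 by auto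
    have indF0: "ind (F - set p) = (\<lambda>e. ind F e - ind (set p) e)"
      using p(2) by (auto simp: ind_def fun_eq_iff)
    have DP: "\<And>\<phi>. Dsum E s t (ind (set p)) \<phi> = \<phi> a - \<phi> b"
      using Dsum_path[OF wp dp fE] .
    have cons0: "\<forall>x\<in>V-Bd. Dsum E s t (ind (F - set p)) (ind {x}) = 0"
    proof
      fix x assume x: "x \<in> V - Bd"
      then have "ind {x} a = 0" "ind {x} b = 0" using ab aBd by (auto simp: ind_def)
      then show "Dsum E s t (ind (F - set p)) (ind {x}) = 0"
        using psubset.prems(2) x unfolding indF0 Dsum_diff DP by simp
    qed
    from psubset.IH[OF sub] psubset.prems(1) cons0 obtain ps where
      ps: "decomp_ok V E s t Bd B2 (F - set p) ps" by auto
    define G where "G = (\<Union>p\<in>set ps. set p)"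
    have GF: "G \<subseteq> F - set p" using ps unfolding decomp_ok_def G_def by blast
    have psG: "\<forall>x\<in>V-Bd. Dsum E s t (ind G) (ind {x}) = 0" "Dsum E s t (ind G) (ind B2) = real (length ps)"
      using ps unfolding decomp_ok_def G_def by blast+
    have G': "(\<Union>q\<in>set (p # ps). set q) = set p \<union> G" unfolding G_def by simp
    have indG': "ind (set p \<union> G) = (\<lambda>e. ind (set p) e + ind G e)"
      using GF by (auto simp: ind_def fun_eq_iff)
    have flux0: "Dsum E s t (ind (F - set p)) (ind B2) = Dsum E s t (ind F) (ind B2) - 1"
    proof -
      have "ind B2 a = 1" "ind B2 b = 0" using ab by (auto simp: ind_def)
      then show ?thesis unfolding indF0 Dsum_diff DP by simp
    qed
    have "decomp_ok V E s t Bd B2 F (p # ps)"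
      unfolding decomp_ok_def
    proof (intro conjI)
      show "\<forall>q\<in>set (p # ps). \<exists>a\<in>B2. \<exists>b\<in>Bd - B2. dpath E s t a q b"
        using ps ab p(1) unfolding decomp_ok_def by auto
      show "\<forall>i<length (p # ps). \<forall>j<length (p # ps). i \<noteq> j \<longrightarrow> set ((p # ps) ! i) \<inter> set ((p # ps) ! j) = {}"
      proof (intro allI impI)
        fix i j assume ij: "i < length (p # ps)" "j < length (p # ps)" "i \<noteq> j"
        show "set ((p # ps) ! i) \<inter> set ((p # ps) ! j) = {}"
        proof (cases i)
          case 0
          then obtain j' where j': "j = Suc j'" "j' < length ps" using ij by (cases j) auto
          have "set (ps ! j') \<subseteq> G" unfolding G_def using j'(2) nth_mem by blast
          then show ?thesis using 0 j' GF by auto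
        next
          case (Suc i')
          show ?thesis
          proof (cases j)
            case 0
            have "set (ps ! i') \<subseteq> G" unfolding G_def using Suc ij nth_mem by (metis UN_upper length_Cons not_less_eq)
            then show ?thesis using 0 Suc GF by auto
          next
            case (Suc j')
            then show ?thesis using \<open>i = Suc i'\<close> ij ps unfolding decomp_ok_def by auto
          qed
        qed
      qed
      show "\<forall>e. real (card {i. i < length (p # ps) \<and> e \<in> set ((p # ps) ! i)}) = ind (\<Union>q\<in>set (p # ps). set q) e"
      proof
        fix e
        have "real (card {i. i < length ps \<and> e \<in> set (ps ! i)}) = ind G e"
          using ps unfolding decomp_ok_def G_def by blast
        then show "real (card {i. i < length (p # ps) \<and> e \<in> set ((p # ps) ! i)}) = ind (\<Union>q\<in>set (p # ps). set q) e"
          unfolding card_cons_idx G' indG' by simp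
      qed
      show "(\<Union>q\<in>set (p # ps). set q) \<subseteq> F" using G' GF p(2) by auto
      show "\<forall>x\<in>V-Bd. Dsum E s t (ind (\<Union>q\<in>set (p # ps). set q)) (ind {x}) = 0"
      proof
        fix x assume x: "x \<in> V - Bd"
        then have "ind {x} a = 0" "ind {x} b = 0" using ab aBd by (auto simp: ind_def)
        then show "Dsum E s t (ind (\<Union>q\<in>set (p # ps). set q)) (ind {x}) = 0"
          using psG x unfolding G' indG' Dsum_add DP by simp
      qed
      show "Dsum E s t (ind (\<Union>q\<in>set (p # ps). set q)) (ind B2) = real (length (p # ps))"
      proof -
        have "ind B2 a = 1" "ind B2 b = 0" using ab by (auto simp: ind_def)
        then show ?thesis using psG unfolding G' indG' Dsum_add DP by simp
      qed
      show "Dsum E s t (ind F) (ind B2) \<le> real (length (p # ps))"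
        using ps flux0 unfolding decomp_ok_def by simp
    qed
    then show ?thesis by blast
  qed
qed

theorem lemma2:
  fixes V :: "'v set" and E :: "'e set" and s t :: "'e \<Rightarrow> 'v"
    and Bd B1 B2 B3 :: "'v set" and v :: "'e \<Rightarrow> real"
  assumes net: "network V E s t Bd"
    and sb: "inner_superbalanced V E s t Bd"
    and part: "Bd = B1 \<union> B2 \<union> B3" "B1 \<inter> B2 = {}" "B1 \<inter> B3 = {}" "B2 \<inter> B3 = {}"
    and S1: "maxflux V E s t Bd B1 = 0"
    and reach: "reachable_from V E s t Bd B1 v"
  shows "\<exists>w. is_flow V E s t Bd w \<and> zero_one E w \<and> (\<forall>e\<in>E. v e \<le> w e) \<and>
             is_max_flow V E s t Bd B2 (\<lambda>e. w e - v e) \<and>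
             (\<exists>ps :: 'e list list.
                real (length ps) = maxflux V E s t Bd B2 \<and>
                (\<forall>p\<in>set ps. \<exists>a\<in>B2. \<exists>b\<in>Bd - B2. dpath E s t a p b) \<and>
                (\<forall>i<length ps. \<forall>j<length ps. i \<noteq> j \<longrightarrow> set (ps ! i) \<inter> set (ps ! j) = {}) \<and>
                (\<forall>e\<in>E. w e - v e = real (card {i. i < length ps \<and> e \<in> set (ps ! i)}))) \<and>
             reachable_from V E s t Bd (B1 \<union> B2) w"
proof -
  have fV: "finite V" and fE: "finite E" and BdV: "Bd \<subseteq> V" and eV: "\<forall>e\<in>E. s e \<in> V \<and> t e \<in> V"
    using net unfolding network_def by auto
  have vflow: "is_flow V E s t Bd v" and v01: "zero_one E v"
    and vreach: "\<forall>e\<in>E. v e \<noteq> 0 \<longrightarrow> (\<exists>a\<in>B1. \<exists>es. dpath E s t a es (s e) \<and> (\<forall>d\<in>set es. v d = 1))"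
    using reach unfolding reachable_from_def by auto
  have vcons: "\<forall>x\<in>V-Bd. Dsum E s t v (ind {x}) = 0"
    using vflow unfolding is_flow_def cons_Dsum[OF fE] by blast
  have B1Bd: "B1 \<subseteq> Bd" and B2Bd: "B2 \<subseteq> Bd" using part by auto
  have consflow: "is_flow V E s t Bd f \<longleftrightarrow> (\<forall>e\<in>E. 0 \<le> f e \<and> f e \<le> 1) \<and> (\<forall>x\<in>V-Bd. Dsum E s t f (ind {x}) = 0)" for f
    unfolding is_flow_def cons_Dsum[OF fE] by (rule refl)
  have indflow: "is_flow V E s t Bd (ind F)" if "\<forall>x\<in>V-Bd. Dsum E s t (ind F) (ind {x}) = 0" for F
    using that unfolding consflow by (simp add: ind_def)

  define R where "R = reach E s t B1"
  have Rstep: "\<And>e. e \<in> E \<Longrightarrow> s e \<in> R \<Longrightarrow> t e \<in> R"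
    unfolding R_def using reach_step[of "s e" E s t B1 e for e] by simp
  have vR: "\<And>e. e \<in> E \<Longrightarrow> v e \<noteq> 0 \<Longrightarrow> s e \<in> R"
  proof -
    fix e assume "e \<in> E" "v e \<noteq> 0"
    then obtain a es where "a \<in> B1" "dpath E s t a es (s e)" using vreach by blast
    then have "a \<in> B1" "walk E s t a es (s e)" unfolding dpath_def by simp_all
    then show "s e \<in> R" unfolding R_def reach_def by blast
  qed
  have RBd: "R \<inter> Bd \<subseteq> B1"
  proof
    fix b assume b: "b \<in> R \<inter> Bd"
    show "b \<in> B1"
    proof (rule ccontr)
      assume nb: "b \<notin> B1"
      have "b \<in> reach E s t B1" using b unfolding R_def by blast
      then obtain a p where a: "a \<in> B1" "walk E s t a p b" unfolding reach_def by blast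
      obtain q where q: "dpath E s t a q b" using shortcut[OF a(2)] by blast
      have wq: "walk E s t a q b" using q by (simp add: dpath_def)
      have dq: "distinct q" using q by (rule dpath_distinct)
      have DP: "\<And>\<phi>. Dsum E s t (ind (set q)) \<phi> = \<phi> a - \<phi> b" using Dsum_path[OF wq dq fE] .
      have aBd: "a \<in> Bd" using a B1Bd by auto
      have "is_flow V E s t Bd (ind (set q))"
      proof (rule indflow, intro ballI)
        fix x assume x: "x \<in> V - Bd"
        then have "ind {x} a = 0" "ind {x} b = 0" using aBd b by (auto simp: ind_def)
        then show "Dsum E s t (ind (set q)) (ind {x}) = 0" unfolding DP by simp
      qed
      then have "flux E s t B1 (ind (set q)) \<le> 0" using flux_le_maxflux[OF fE, of V s t Bd "ind (set q)" B1] S1 by simp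
      moreover have "ind B1 a = 1" "ind B1 b = 0" using a nb by (auto simp: ind_def)
      ultimately show False unfolding flux_Dsum[OF fE] DP by simp
    qed
  qed
  have B2R: "B2 \<inter> R = {}" using RBd part by auto

  define E' where "E' = {e\<in>E. v e = 0}"
  define C where "C = {F. F \<subseteq> E' \<and> (\<forall>x\<in>V-Bd. Dsum E s t (ind F) (ind {x}) = 0)}"
  have finC: "finite C"
  proof (rule finite_subset)
    show "C \<subseteq> Pow E'" unfolding C_def by blast
    show "finite (Pow E')" unfolding E'_def using fE by simp
  qed
  have emC: "{} \<in> C" unfolding C_def by (simp add: ind_def Dsum_def)
  define val where "val F = Dsum E s t (ind F) (ind B2)" for F
  obtain F where F: "F \<in> C" and Fmax: "\<And>G. G \<in> C \<Longrightarrow> val G \<le> val F"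
  proof -
    have "Max (val ` C) \<in> val ` C" using finC emC by (intro Max_in) auto
    then obtain F where F1: "F \<in> C" "val F = Max (val ` C)" by auto
    have "\<And>G. G \<in> C \<Longrightarrow> val G \<le> Max (val ` C)" using finC by auto
    then show ?thesis using F1 that by simp
  qed
  have FE': "F \<subseteq> E'" and Fcons: "\<forall>x\<in>V-Bd. Dsum E s t (ind F) (ind {x}) = 0" using F unfolding C_def by auto
  have FE: "F \<subseteq> E" using FE' unfolding E'_def by auto

  define Ar where "Ar = {(e, True) | e. e \<in> E' \<and> e \<notin> F} \<union> {(e, False) | e. e \<in> F}"
  define X where "X = reach Ar (rs s t) (rt s t) B2"
  have ArE: "fst ` Ar \<subseteq> E" using FE unfolding Ar_def E'_def by auto
  have XV: "X \<subseteq> V" unfolding X_def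
  proof (rule reach_sub)
    show "B2 \<subseteq> V" using B2Bd BdV by auto
    show "\<forall>x\<in>Ar. rt s t x \<in> V" using ArE eV unfolding rt_def by auto
  qed
  have B2X: "B2 \<subseteq> X" unfolding X_def by (rule reach_base)
  have Xstep1: "\<And>e. e \<in> E' \<Longrightarrow> e \<notin> F \<Longrightarrow> s e \<in> X \<Longrightarrow> t e \<in> X"
  proof -
    fix e assume "e \<in> E'" "e \<notin> F" "s e \<in> X"
    moreover have "(e, True) \<in> Ar" using \<open>e \<in> E'\<close> \<open>e \<notin> F\<close> unfolding Ar_def by auto
    ultimately show "t e \<in> X" unfolding X_def using reach_step[of "s e" Ar "rs s t" "rt s t" B2 "(e, True)"]
      by (simp add: rs_def rt_def)
  qed
  have Xstep2: "\<And>e. e \<in> F \<Longrightarrow> t e \<in> X \<Longrightarrow> s e \<in> X"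
  proof -
    fix e assume "e \<in> F" "t e \<in> X"
    moreover have "(e, False) \<in> Ar" using \<open>e \<in> F\<close> unfolding Ar_def by auto
    ultimately show "s e \<in> X" unfolding X_def using reach_step[of "t e" Ar "rs s t" "rt s t" B2 "(e, False)"]
      by (simp add: rs_def rt_def)
  qed
  have XB: "X \<inter> (Bd - B2) = {}"
  proof (rule ccontr)
    assume "X \<inter> (Bd - B2) \<noteq> {}"
    then obtain b a q0 where b: "b \<in> Bd - B2" "a \<in> B2" "walk Ar (rs s t) (rt s t) a q0 b"
      unfolding X_def reach_def by blast
    obtain q where q: "dpath Ar (rs s t) (rt s t) a q b" using shortcut[OF b(3)] by blast
    have wq: "walk Ar (rs s t) (rt s t) a q b" using q by (simp add: dpath_def)
    have dq: "distinct q" using q by (rule dpath_distinct)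
    have qAr: "set q \<subseteq> Ar" using wq by (rule walk_set)
    have fq: "fst ` set q \<subseteq> E" using qAr ArE by auto
    have DQ: "\<And>\<phi>. Dsum E s t (hq q) \<phi> = \<phi> a - \<phi> b" using Dsum_res[OF wq dq fq fE] .
    define F' where "F' = (F - {e. (e, False) \<in> set q}) \<union> {e. (e, True) \<in> set q}"
    have T: "\<And>e. (e, True) \<in> set q \<Longrightarrow> e \<notin> F \<and> e \<in> E'" using qAr unfolding Ar_def by auto
    have Fa: "\<And>e. (e, False) \<in> set q \<Longrightarrow> e \<in> F" using qAr unfolding Ar_def by auto
    have indF': "ind F' = (\<lambda>e. ind F e + hq q e)"
    proof
      fix e
      show "ind F' e = ind F e + hq q e"
        using T[of e] Fa[of e] unfolding F'_def ind_def hq_def by auto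
    qed
    have aBd: "a \<in> Bd" using b B2Bd by auto
    have "F' \<in> C" unfolding C_def
    proof (intro CollectI conjI ballI)
      show "F' \<subseteq> E'" using FE' T unfolding F'_def by auto
      fix x assume x: "x \<in> V - Bd"
      then have "ind {x} a = 0" "ind {x} b = 0" using aBd b by (auto simp: ind_def)
      then show "Dsum E s t (ind F') (ind {x}) = 0" using Fcons x unfolding indF' Dsum_add DQ by simp
    qed
    moreover have "val F' = val F + 1"
    proof -
      have "ind B2 a = 1" "ind B2 b = 0" using b by (auto simp: ind_def)
      then show ?thesis unfolding val_def indF' Dsum_add DQ by simp
    qed
    ultimately show False using Fmax by fastforce
  qed

  define cE' where "cE' = (\<Sum>e\<in>E. if v e = 0 \<and> s e \<in> X \<and> t e \<notin> X then 1 else 0 :: real)"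
  have tight: "Dsum E s t (ind F) (ind X) = cE'"
    unfolding Dsum_def cE'_def
  proof (rule sum.cong)
    fix e assume e: "e \<in> E"
    show "ind F e * (ind X (s e) - ind X (t e)) = (if v e = 0 \<and> s e \<in> X \<and> t e \<notin> X then 1 else 0)"
    proof (cases "e \<in> F")
      case True
      then have "v e = 0" using FE' unfolding E'_def by auto
      then show ?thesis using True Xstep2[OF True] by (auto simp: ind_def)
    next
      case False
      have "v e = 0 \<Longrightarrow> s e \<in> X \<Longrightarrow> t e \<in> X" using Xstep1[OF _ False] e unfolding E'_def by auto
      then show ?thesis using False by (auto simp: ind_def)
    qed
  qed simp
  have XmB: "finite (X - B2)" "X - B2 \<subseteq> V - Bd" using XV XB fV by (auto intro: finite_subset)
  have XF: "Dsum E s t (ind F) (ind X) = val F"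
  proof -
    have "Dsum E s t (ind F) (ind (X - B2)) = 0"
      using XmB Fcons by (intro inner_zero) auto
    then show ?thesis unfolding val_def using ind_split[OF B2X] by (simp add: Dsum_phi_add)
  qed

  define Y where "Y = X - R"
  define Z where "Z = X \<inter> R"
  have ZV: "Z \<subseteq> V - Bd"
  proof
    fix z assume z: "z \<in> Z"
    then have "z \<in> V" using XV unfolding Z_def by auto
    moreover have "z \<notin> Bd"
    proof
      assume "z \<in> Bd"
      then have "z \<in> B1" using RBd z unfolding Z_def by auto
      then show False using XB z part(2) \<open>z \<in> Bd\<close> unfolding Z_def by auto
    qed
    ultimately show "z \<in> V - Bd" by auto
  qed
  have fZ: "finite Z" using ZV fV by (auto intro: finite_subset)
  have sbZ: "Dsum E s t (\<lambda>_. 1) (ind Z) \<ge> 0"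
  proof -
    have "\<forall>z\<in>Z. Dsum E s t (\<lambda>_. 1) (ind {z}) \<ge> 0"
    proof
      fix z assume "z \<in> Z"
      then have z: "z \<in> V - Bd" using ZV by auto
      have "Dsum E s t (\<lambda>_. 1) (ind {z}) = (\<Sum>e\<in>{e\<in>E. s e = z}. (1::real)) - (\<Sum>e\<in>{e\<in>E. t e = z}. 1)"
        using flux_Dsum[OF fE, of s t "{z}" "\<lambda>_. 1"] by (simp add: flux_def)
      then show "Dsum E s t (\<lambda>_. 1) (ind {z}) \<ge> 0" using sb z unfolding inner_superbalanced_def by auto
    qed
    then show ?thesis unfolding Dsum_sum_vertices[OF fZ] by (intro sum_nonneg) blast
  qed
  have vZ: "Dsum E s t v (ind Z) = 0" using fZ ZV vcons by (intro inner_zero) auto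
  define cY where "cY = (\<Sum>e\<in>E. if s e \<in> Y \<and> t e \<notin> Y then 1 else 0 :: real)"
  have cYle: "cY \<le> cE'"
  proof -
    have "cY + Dsum E s t (\<lambda>e. 1 - v e) (ind Z) \<le> cE'"
      unfolding cY_def cE'_def Dsum_def sum.distrib[symmetric]
    proof (rule sum_mono)
      fix e assume e: "e \<in> E"
      have v01e: "v e = 0 \<or> v e = 1" using v01 e unfolding zero_one_def by auto
      have st: "s e \<in> R \<Longrightarrow> t e \<in> R" using Rstep[OF e] .
      have vs: "v e \<noteq> 0 \<Longrightarrow> s e \<in> R" using vR[OF e] .
      show "(if s e \<in> Y \<and> t e \<notin> Y then 1 else 0) + (1 - v e) * (ind Z (s e) - ind Z (t e))
            \<le> (if v e = 0 \<and> s e \<in> X \<and> t e \<notin> X then 1 else 0)"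
        using v01e st vs unfolding Y_def Z_def ind_def by auto
    qed
    moreover have "Dsum E s t (\<lambda>e. 1 - v e) (ind Z) \<ge> 0"
      using sbZ vZ by (simp add: Dsum_diff)
    ultimately show ?thesis by simp
  qed
  have B2Y: "B2 \<subseteq> Y" using B2X B2R unfolding Y_def by auto
  have YmB: "finite (Y - B2)" "Y - B2 \<subseteq> V - Bd" using XmB unfolding Y_def by (auto intro: finite_subset)
  have wd: "flux E s t B2 f \<le> cY" if f: "is_flow V E s t Bd f" for f
  proof -
    have fc: "\<forall>x\<in>V-Bd. Dsum E s t f (ind {x}) = 0" and fb: "\<forall>e\<in>E. 0 \<le> f e \<and> f e \<le> 1"
      using f unfolding consflow by auto
    have "Dsum E s t f (ind (Y - B2)) = 0" using YmB fc by (intro inner_zero) auto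
    then have "flux E s t B2 f = Dsum E s t f (ind Y)"
      unfolding flux_Dsum[OF fE] using ind_split[OF B2Y] by (simp add: Dsum_phi_add)
    also have "\<dots> \<le> cY" unfolding Dsum_def cY_def
    proof (rule sum_mono)
      fix e assume "e \<in> E"
      then show "f e * (ind Y (s e) - ind Y (t e)) \<le> (if s e \<in> Y \<and> t e \<notin> Y then 1 else 0)"
        using fb by (auto simp: ind_def)
    qed
    finally show ?thesis .
  qed
  have Fflow: "is_flow V E s t Bd (ind F)" using indflow Fcons by blast
  have M: "maxflux V E s t Bd B2 = val F"
  proof (rule antisym)
    show "maxflux V E s t Bd B2 \<le> val F"
      using maxflux_le[of V E s t Bd B2 cY] wd cYle tight XF by fastforce
    show "val F \<le> maxflux V E s t Bd B2"
      using flux_le_maxflux[OF fE Fflow, of B2] unfolding val_def flux_Dsum[OF fE] .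
  qed

  obtain ps where ps: "decomp_ok V E s t Bd B2 F ps"
    using decomp[OF fE fV B2Bd BdV eV, of F] FE Fcons fE by (meson finite_subset)
  define G where "G = (\<Union>p\<in>set ps. set p)"
  have paths: "\<forall>p\<in>set ps. \<exists>a\<in>B2. \<exists>b\<in>Bd - B2. dpath E s t a p b"
    and disj: "\<forall>i<length ps. \<forall>j<length ps. i \<noteq> j \<longrightarrow> set (ps ! i) \<inter> set (ps ! j) = {}"
    and cnt: "\<forall>e. real (card {i. i < length ps \<and> e \<in> set (ps ! i)}) = ind G e"
    and GF: "G \<subseteq> F"
    and Gcons: "\<forall>x\<in>V-Bd. Dsum E s t (ind G) (ind {x}) = 0"
    and Gflux: "Dsum E s t (ind G) (ind B2) = real (length ps)"
    and lenge: "val F \<le> real (length ps)"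
    using ps unfolding decomp_ok_def G_def val_def by auto
  have Gflow: "is_flow V E s t Bd (ind G)" using indflow Gcons by blast
  have lenM: "real (length ps) = maxflux V E s t Bd B2"
  proof (rule antisym)
    show "real (length ps) \<le> maxflux V E s t Bd B2"
      using flux_le_maxflux[OF fE Gflow, of B2] Gflux unfolding flux_Dsum[OF fE] by simp
    show "maxflux V E s t Bd B2 \<le> real (length ps)" using M lenge by simp
  qed
  have Gv: "\<And>e. e \<in> G \<Longrightarrow> v e = 0" using GF FE' unfolding E'_def by auto
  have GE: "G \<subseteq> E" using GF FE by auto
  define w where "w = (\<lambda>e. v e + ind G e)"
  have wv: "(\<lambda>e. w e - v e) = ind G" unfolding w_def by auto
  have w01: "zero_one E w"
    using v01 Gv unfolding zero_one_def w_def ind_def by auto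
  have wflow: "is_flow V E s t Bd w"
    unfolding consflow
  proof (intro conjI)
    show "\<forall>e\<in>E. 0 \<le> w e \<and> w e \<le> 1" using w01 unfolding zero_one_def by auto
    show "\<forall>x\<in>V - Bd. Dsum E s t w (ind {x}) = 0" using vcons Gcons unfolding w_def Dsum_add by simp
  qed
  have wreach: "reachable_from V E s t Bd (B1 \<union> B2) w"
    unfolding reachable_from_def
  proof (intro conjI ballI impI)
    show "is_flow V E s t Bd w" by (rule wflow)
    show "zero_one E w" by (rule w01)
    fix e assume e: "e \<in> E" and we: "w e \<noteq> 0"
    show "\<exists>a\<in>B1 \<union> B2. \<exists>es. dpath E s t a es (s e) \<and> (\<forall>d\<in>set es. w d = 1)"
    proof (cases "v e = 0")
      case False
      then obtain a es where a: "a \<in> B1" "dpath E s t a es (s e)" "\<forall>d\<in>set es. v d = 1"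
        using vreach e by blast
      have "set es \<subseteq> E" using a(2) walk_set unfolding dpath_def by metis
      then have "\<forall>d\<in>set es. w d = 1" using a(3) Gv unfolding w_def ind_def by force
      then show ?thesis using a by blast
    next
      case True
      then have "e \<in> G" using we unfolding w_def ind_def by (auto split: if_splits)
      then obtain p where p: "p \<in> set ps" "e \<in> set p" unfolding G_def by auto
      then obtain a b where ab: "a \<in> B2" "dpath E s t a p b" using paths by blast
      obtain p1 p2 where pp: "p = p1 @ e # p2" using split_list[OF p(2)] by blast
      have "walk E s t a (p1 @ e # p2) b" using ab pp by (simp add: dpath_def)
      then obtain m where m: "walk E s t a p1 m" "walk E s t m (e # p2) b" unfolding walk_append by blast
      have "distinct (a # map t p1)" using ab pp unfolding dpath_def by auto
      then have "dpath E s t a p1 (s e)" using m unfolding dpath_def by auto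
      moreover have "\<forall>d\<in>set p1. w d = 1"
      proof
        fix d assume "d \<in> set p1"
        then have "d \<in> G" using pp p unfolding G_def by (metis UN_iff Un_iff set_append)
        then show "w d = 1" using Gv unfolding w_def ind_def by auto
      qed
      ultimately show ?thesis using ab by blast
    qed
  qed
  show ?thesis
  proof (intro exI[of _ w] conjI)
    show "is_flow V E s t Bd w" by (rule wflow)
    show "zero_one E w" by (rule w01)
    show "\<forall>e\<in>E. v e \<le> w e" unfolding w_def ind_def by auto
    show "is_max_flow V E s t Bd B2 (\<lambda>e. w e - v e)"
      unfolding wv is_max_flow_def flux_Dsum[OF fE] using Gflow Gflux lenM by simp
    show "\<exists>ps :: 'e list list.
                real (length ps) = maxflux V E s t Bd B2 \<and>
                (\<forall>p\<in>set ps. \<exists>a\<in>B2. \<exists>b\<in>Bd - B2. dpath E s t a p b) \<and>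
                (\<forall>i<length ps. \<forall>j<length ps. i \<noteq> j \<longrightarrow> set (ps ! i) \<inter> set (ps ! j) = {}) \<and>
                (\<forall>e\<in>E. w e - v e = real (card {i. i < length ps \<and> e \<in> set (ps ! i)}))"
      using lenM paths disj cnt unfolding w_def by (intro exI[of _ ps]) auto
    show "reachable_from V E s t Bd (B1 \<union> B2) w" by (rule wreach)
  qed
qed

end
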